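(* Let $T_{init}$ be the number of nodes of the initial tree. The expected optimization time of SMO-GP-single and of SMO-GP-multi on MO-ORDER is $O(n\,T_{init}+n^2\log n)$.
   Context: Fix an integer $n\ge 1$; the terminal set is $T=\{x_1,\bar x_1,\dots,x_n,\bar x_n\}$ ($\bar x_i$ the complement of $x_i$). A syntax tree is either the empty tree or a rooted ordered binary tree whose inner nodes are all labelled by the binary function $J$ (join, exactly two ordered children) and whose leaves are labelled by elements of $T$. The complexity $C(X)$ is the number of nodes of $X$ (0 for the empty tree). The leaf list $l$ of $X$ is the sequence of leaf labels in inorder. ORDER: build a list $S$ by scanning $l$ front to rear and appending a literal only if neither it nor its complement is already in $S$; ORDER$(X)$ is the number of positive literals $x_i$ in $S$. MO-ORDER$(X)=(\mathrm{ORDER}(X),C(X))$, ORDER maximized, $C$ minimized. Mutation (HVL-Prime applied $k$ times): each application chooses uniformly at random one of three operations. Substitute: replace a uniformly random leaf by a uniformly random $u\in T$. Insert: choose a uniformly random node $v$ and uniformly random $u\in T$, replace $v$ by a $J$-node with children $u$ and $v$ in uniformly random order (inserting into the empty tree yields the single leaf $u$). Delete: choose a uniformly random leaf $v$ with parent $p$ and sibling $u$, replace $p$ by $u$ (deleting $p$ and $v$; deleting the only leaf of a one-leaf tree yields the empty tree). For single-operation mutation $k=1$; for multi-operation mutation $k=1+\mathrm{Pois}(1)$ with $\mathrm{Pois}(1)$ Poisson with mean 1. Dominance for MO-$F$: $Y\succeq X$ iff $F(Y)\ge F(X)$ and $C(Y)\le C(X)$; $Y\succ X$ iff $Y\succeq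 X$ and ($F(Y)>F(X)$ or $C(Y)<C(X)$). A tree is Pareto optimal if no tree dominates it; the Pareto front is the set of objective vectors of Pareto optimal trees. SMO-GP: choose an initial tree $X$ and set $P:=\{X\}$; repeat: choose $X\in P$ uniformly at random, let $Y$ be a mutated copy of $X$; if no $Z\in P$ satisfies $Z\succ Y$, set $P:=(P\setminus\{Z\in P: Y\succeq Z\})\cup\{Y\}$. SMO-GP-single uses single-operation, SMO-GP-multi multi-operation mutation. Expected optimization time: expected number of iterations until the population contains, for every objective vector in the Pareto front, a tree with that objective vector. *)

theory Defs
  imports "HOL-Probability.Probability"
begin

datatype lit = Pos nat | Neg nat

fun compl :: "lit \<Rightarrow> lit" where
  "compl (Pos i) = Neg i" | "compl (Neg i) = Pos i"

text \<open>Non-empty trees: leaves labelled by literals, inner nodes are J (join).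
  A syntax tree is an option: None is the empty tree.\<close>
datatype bt = Lf lit | J bt bt

type_synonym stree = "bt option"

definition lits :: "nat \<Rightarrow> lit set" where
  "lits n = Pos ` {1..n} \<union> Neg ` {1..n}"

fun size_bt :: "bt \<Rightarrow> nat" where
  "size_bt (Lf a) = 1" | "size_bt (J l r) = Suc (size_bt l + size_bt r)"

fun nleaves :: "bt \<Rightarrow> nat" where
  "nleaves (Lf a) = 1" | "nleaves (J l r) = nleaves l + nleaves r"

fun leaf_list :: "bt \<Rightarrow> lit list" where
  "leaf_list (Lf a) = [a]" | "leaf_list (J l r) = leaf_list l @ leaf_list r"

definition cplx :: "stree \<Rightarrow> nat" where
  "cplx X = (case X of None \<Rightarrow> 0 | Some t \<Rightarrow> size_bt t)"

definition leaves :: "stree \<Rightarrow> lit list" where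
  "leaves X = (case X of None \<Rightarrow> [] | Some t \<Rightarrow> leaf_list t)"

definition valid :: "nat \<Rightarrow> stree \<Rightarrow> bool" where
  "valid n X \<longleftrightarrow> set (leaves X) \<subseteq> lits n"

definition order_step :: "lit list \<Rightarrow> lit \<Rightarrow> lit list" where
  "order_step S x = (if x \<in> set S \<or> compl x \<in> set S then S else S @ [x])"

definition order_S :: "lit list \<Rightarrow> lit list" where
  "order_S l = foldl order_step [] l"

definition ORDER :: "stree \<Rightarrow> nat" where
  "ORDER X = length (filter (\<lambda>x. \<exists>i. x = Pos i) (order_S (leaves X)))"

definition wdom :: "stree \<Rightarrow> stree \<Rightarrow> bool" where
  "wdom Y X \<longleftrightarrow> ORDER Y \<ge> ORDER X \<and> cplx Y \<le> cplx X"

definition sdom :: "stree \<Rightarrow> stree \<Rightarrow> bool" where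
  "sdom Y X \<longleftrightarrow> wdom Y X \<and> (ORDER Y > ORDER X \<or> cplx Y < cplx X)"

definition pareto_optimal :: "nat \<Rightarrow> stree \<Rightarrow> bool" where
  "pareto_optimal n X \<longleftrightarrow> valid n X \<and> \<not> (\<exists>Y. valid n Y \<and> sdom Y X)"

definition pareto_front :: "nat \<Rightarrow> (nat \<times> nat) set" where
  "pareto_front n = {(ORDER X, cplx X) | X. pareto_optimal n X}"

text \<open>Replace the i-th leaf (inorder, 0-based) by literal u.\<close>
fun subst_leaf :: "nat \<Rightarrow> lit \<Rightarrow> bt \<Rightarrow> bt" where
  "subst_leaf i u (Lf a) = Lf u"
| "subst_leaf i u (J l r) =
     (if i < nleaves l then J (subst_leaf i u l) r
      else J l (subst_leaf (i - nleaves l) u r))"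

text \<open>Replace the i-th node (preorder, 0-based) v by f v.\<close>
fun ins_at :: "(bt \<Rightarrow> bt) \<Rightarrow> nat \<Rightarrow> bt \<Rightarrow> bt" where
  "ins_at f i (Lf a) = f (Lf a)"
| "ins_at f i (J l r) =
     (if i = 0 then f (J l r)
      else if i \<le> size_bt l then J (ins_at f (i - 1) l) r
      else J l (ins_at f (i - 1 - size_bt l) r))"

fun del_leaf :: "nat \<Rightarrow> bt \<Rightarrow> stree" where
  "del_leaf i (Lf a) = None"
| "del_leaf i (J l r) =
     (if i < nleaves l then
        (case del_leaf i l of None \<Rightarrow> Some r | Some l' \<Rightarrow> Some (J l' r))
      else
        (case del_leaf (i - nleaves l) r of None \<Rightarrow> Some l | Some r' \<Rightarrow> Some (J l r')))"

definition substitute :: "nat \<Rightarrow> stree \<Rightarrow> stree pmf" where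
  "substitute n X = (case X of
      None \<Rightarrow> return_pmf None
    | Some t \<Rightarrow> do { i \<leftarrow> pmf_of_set {..<nleaves t}; u \<leftarrow> pmf_of_set (lits n);
                     return_pmf (Some (subst_leaf i u t)) })"

definition insert_op :: "nat \<Rightarrow> stree \<Rightarrow> stree pmf" where
  "insert_op n X = (case X of
      None \<Rightarrow> do { u \<leftarrow> pmf_of_set (lits n); return_pmf (Some (Lf u)) }
    | Some t \<Rightarrow> do { i \<leftarrow> pmf_of_set {..<size_bt t}; u \<leftarrow> pmf_of_set (lits n);
                     b \<leftarrow> bernoulli_pmf (1/2);
                     return_pmf (Some (ins_at (\<lambda>v. if b then J (Lf u) v else J v (Lf u)) i t)) })"

definition delete_op :: "stree \<Rightarrow> stree pmf" where
  "delete_op X = (case X of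
      None \<Rightarrow> return_pmf None
    | Some t \<Rightarrow> do { i \<leftarrow> pmf_of_set {..<nleaves t}; return_pmf (del_leaf i t) })"

definition hvl_prime :: "nat \<Rightarrow> stree \<Rightarrow> stree pmf" where
  "hvl_prime n X = do { op \<leftarrow> pmf_of_set {0::nat, 1, 2};
      (if op = 0 then substitute n X else if op = 1 then insert_op n X else delete_op X) }"

definition hvl_iter :: "nat \<Rightarrow> nat \<Rightarrow> stree \<Rightarrow> stree pmf" where
  "hvl_iter n k X = ((\<lambda>D. bind_pmf D (hvl_prime n)) ^^ k) (return_pmf X)"

definition mutate_single :: "nat \<Rightarrow> stree \<Rightarrow> stree pmf" where
  "mutate_single n X = hvl_prime n X"

definition mutate_multi :: "nat \<Rightarrow> stree \<Rightarrow> stree pmf" where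
  "mutate_multi n X = do { k \<leftarrow> poisson_pmf 1; hvl_iter n (Suc k) X }"

definition smo_step :: "(nat \<Rightarrow> stree \<Rightarrow> stree pmf) \<Rightarrow> nat \<Rightarrow> stree set \<Rightarrow> stree set pmf" where
  "smo_step mut n P = do { X \<leftarrow> pmf_of_set P; Y \<leftarrow> mut n X;
      return_pmf (if \<exists>Z\<in>P. sdom Z Y then P else {Z \<in> P. \<not> wdom Y Z} \<union> {Y}) }"

definition covers_front :: "nat \<Rightarrow> stree set \<Rightarrow> bool" where
  "covers_front n P \<longleftrightarrow> (\<forall>v \<in> pareto_front n. \<exists>X \<in> P. (ORDER X, cplx X) = v)"

text \<open>Chain stopped at the first time the front is covered: state None means
  "the front has already been covered at some earlier time".\<close>
definition stopped_step :: "(nat \<Rightarrow> stree \<Rightarrow> stree pmf) \<Rightarrow> nat \<Rightarrow> stree set option \<Rightarrow> stree set option pmf" where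
  "stopped_step mut n s = (case s of
      None \<Rightarrow> return_pmf None
    | Some P \<Rightarrow> (if covers_front n P then return_pmf None else map_pmf Some (smo_step mut n P)))"

definition stopped_dist :: "(nat \<Rightarrow> stree \<Rightarrow> stree pmf) \<Rightarrow> nat \<Rightarrow> stree \<Rightarrow> nat \<Rightarrow> stree set option pmf" where
  "stopped_dist mut n X0 t = ((\<lambda>D. bind_pmf D (stopped_step mut n)) ^^ t) (return_pmf (Some {X0}))"

text \<open>Pr[T > t]: after t iterations the front has not been covered at any time \<le> t.\<close>
definition prob_not_done :: "(nat \<Rightarrow> stree \<Rightarrow> stree pmf) \<Rightarrow> nat \<Rightarrow> stree \<Rightarrow> nat \<Rightarrow> real" where
  "prob_not_done mut n X0 t =
     measure_pmf.prob (stopped_dist mut n X0 t) {Some P | P. \<not> covers_front n P}"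

text \<open>Expected optimization time E[T] = sum over t \<ge> 0 of Pr[T > t] (possibly infinite).\<close>
definition expected_opt_time :: "(nat \<Rightarrow> stree \<Rightarrow> stree pmf) \<Rightarrow> nat \<Rightarrow> stree \<Rightarrow> ennreal" where
  "expected_opt_time mut n X0 = (\<Sum>t. ennreal (prob_not_done mut n X0 t))"

end

theory Submission
  imports Defs "HOL-Library.Multiset"
begin


fun var :: "lit \<Rightarrow> nat" where "var (Pos i) = i" | "var (Neg i) = i"
fun isPos :: "lit \<Rightarrow> bool" where "isPos (Pos i) = True" | "isPos (Neg i) = False"

lemma len_leaf_list: "length (leaf_list t) = nleaves t"
  by (induction t) auto
lemma nleaves_pos: "nleaves t \<ge> 1"
  by (induction t) auto
lemma size_bt_eq: "size_bt t = 2 * nleaves t - 1"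
proof (induction t)
  case (J l r)
  have "nleaves l \<ge> 1" "nleaves r \<ge> 1" by (rule nleaves_pos)+
  with J show ?case by simp
qed simp

lemma order_S_snoc: "order_S (xs @ [x]) = order_step (order_S xs) x"
  by (simp add: order_S_def)

lemma order_S_len: "length (order_S l) \<le> length l"
  by (induction l rule: rev_induct) (auto simp: order_S_snoc order_step_def order_S_def)

lemma order_S_set: "set (order_S l) \<subseteq> set l"
  by (induction l rule: rev_induct) (auto simp: order_S_snoc order_step_def order_S_def)

lemma var_eq: "var y = var x \<Longrightarrow> y = x \<or> y = compl x"
  by (cases x; cases y) auto

lemma order_S_distinct: "distinct (map var (order_S l))"
proof (induction l rule: rev_induct)
  case Nil then show ?case by (simp add: order_S_def)
next
  case (snoc x xs)
  then show ?case
    by (auto simp: order_S_snoc order_step_def dest: var_eq[OF sym])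
qed

lemma order_S_full: "length (order_S l) = length l \<Longrightarrow> order_S l = l"
proof (induction l rule: rev_induct)
  case Nil then show ?case by (simp add: order_S_def)
next
  case (snoc x xs)
  have "length (order_S xs) \<le> length xs" by (rule order_S_len)
  with snoc show ?case
    by (auto simp: order_S_snoc order_step_def split: if_splits)
qed

lemma order_S_pos: "\<forall>x\<in>set l. isPos x \<Longrightarrow> distinct (map var l) \<Longrightarrow> order_S l = l"
proof (induction l rule: rev_induct)
  case Nil then show ?case by (simp add: order_S_def)
next
  case (snoc x xs)
  then have IH: "order_S xs = xs" by auto
  from snoc.prems have "x \<notin> set xs" "compl x \<notin> set xs"
    by (cases x; force)+
  then show ?case by (simp add: order_S_snoc order_step_def IH)
qed

lemma ORDER_le_len: "ORDER X \<le> length (leaves X)"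
  unfolding ORDER_def using order_S_len[of "leaves X"]
  by (meson dual_order.trans length_filter_le)

lemma cplx_leaves: "cplx X = 2 * length (leaves X) - 1"
  by (cases X) (auto simp: cplx_def leaves_def size_bt_eq len_leaf_list)

lemma cplx0: "cplx X = 0 \<Longrightarrow> X = None"
proof (cases X)
  case (Some t)
  have "nleaves t \<ge> 1" by (rule nleaves_pos)
  moreover assume "cplx X = 0"
  ultimately show ?thesis using Some by (simp add: cplx_def size_bt_eq)
qed simp

lemma cplx_ge_ORDER: "cplx X \<ge> 2 * ORDER X - 1"
  using ORDER_le_len[of X] cplx_leaves[of X] by linarith

lemma ORDER_None[simp]: "ORDER None = 0"
  by (simp add: ORDER_def leaves_def order_S_def)
lemma cplx_None[simp]: "cplx None = 0"
  by (simp add: cplx_def)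

lemma wdom_vec:
  assumes "wdom Y Z" "ORDER Z = j" "cplx Z = 2*j - 1"
  shows "ORDER Y = j \<and> cplx Y = 2*j - 1"
proof (cases "j = 0")
  case True
  with assms have "cplx Y = 0" by (simp add: wdom_def)
  then have "Y = None" by (rule cplx0)
  with True show ?thesis by simp
next
  case False
  have "cplx Y \<ge> 2 * ORDER Y - 1" by (rule cplx_ge_ORDER)
  with assms False show ?thesis unfolding wdom_def by linarith
qed

lemma ORDER_le_n:
  assumes "valid n X" shows "ORDER X \<le> n"
proof -
  let ?F = "filter isPos (order_S (leaves X))"
  have eq: "filter (\<lambda>x. \<exists>i. x = Pos i) (order_S (leaves X)) = ?F"
    by (rule filter_cong) (auto elim: isPos.elims)
  have d: "distinct (map var ?F)"
    using order_S_distinct[of "leaves X"] by (simp add: distinct_map_filter)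
  have "set (map var ?F) \<subseteq> {1..n}"
    using order_S_set[of "leaves X"] assms by (auto simp: valid_def lits_def)
  then have "card (set (map var ?F)) \<le> n"
    by (metis card_atLeastAtMost card_mono diff_Suc_1 finite_atLeastAtMost)
  with d have "length ?F \<le> n" by (metis distinct_card length_map)
  then show ?thesis by (simp add: ORDER_def eq)
qed



lemma ins_at_props:
  assumes "\<And>v. mset (leaf_list (f v)) = mset (leaf_list v) + {#u#}"
      and "\<And>v. size_bt (f v) = size_bt v + 2"
  shows "mset (leaf_list (ins_at f i t)) = mset (leaf_list t) + {#u#} \<and>
         size_bt (ins_at f i t) = size_bt t + 2"
  by (induction t arbitrary: i) (auto simp: assms)

lemma subst_leaf_set: "set (leaf_list (subst_leaf i u t)) \<subseteq> insert u (set (leaf_list t))"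
  by (induction i u t rule: subst_leaf.induct) auto

lemma del_leaf_props: "set (leaves (del_leaf i t)) \<subseteq> set (leaf_list t) \<and> cplx (del_leaf i t) < size_bt t"
  by (induction i t rule: del_leaf.induct) (auto simp: leaves_def cplx_def split: option.splits)

lemma lits_finite[simp]: "finite (lits n)"
  by (simp add: lits_def)
lemma lits_ne: "n \<ge> 1 \<Longrightarrow> lits n \<noteq> {}"
  by (auto simp: lits_def)
lemma lits_card: "card (lits n) = 2 * n"
proof -
  have "card (lits n) = card (Pos ` {1..n}) + card (Neg ` {1..n})"
    unfolding lits_def by (rule card_Un_disjoint) auto
  also have "\<dots> = 2 * n" by (simp add: card_image inj_on_def)
  finally show ?thesis .
qed

lemma nleaves_ne[simp]: "{..<nleaves t} \<noteq> {}"
  using nleaves_pos[of t] by (simp add: lessThan_empty_iff)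
lemma size_ne[simp]: "{..<size_bt t} \<noteq> {}"
  by (cases t) auto

lemma hvl_valid:
  assumes "n \<ge> 1" "valid n X"
  shows "set_pmf (hvl_prime n X) \<subseteq> {Y. valid n Y}"
proof -
  have L: "set_pmf (pmf_of_set (lits n)) = lits n" using assms(1) by (simp add: lits_ne)
  have s: "set_pmf (substitute n X) \<subseteq> {Y. valid n Y}"
  proof (cases X)
    case (Some t)
    have "valid n (Some (subst_leaf i u t))" if "u \<in> lits n" for i u
      using that assms(2) Some subst_leaf_set[of i u t] by (auto simp: valid_def leaves_def)
    then show ?thesis using Some by (auto simp: substitute_def L)
  qed (simp add: substitute_def valid_def leaves_def)
  have i: "set_pmf (insert_op n X) \<subseteq> {Y. valid n Y}"
  proof (cases X)
    case None then show ?thesis by (auto simp: insert_op_def valid_def leaves_def L)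
  next
    case (Some t)
    { fix i u b assume u: "u \<in> lits n"
      let ?f = "(\<lambda>v. if b then J (Lf u) v else J v (Lf u))"
      have "mset (leaf_list (ins_at ?f i t)) = mset (leaf_list t) + {#u#}"
        using ins_at_props[of ?f u i t] by auto
      then have "set (leaf_list (ins_at ?f i t)) = insert u (set (leaf_list t))"
        by (metis set_mset_mset set_mset_add_mset_insert add_mset_add_single union_commute set_mset_union Un_insert_right sup_bot.right_neutral set_mset_empty insert_is_Un)
      with u assms(2) Some have "valid n (Some (ins_at ?f i t))"
        by (auto simp: valid_def leaves_def) }
    then show ?thesis using Some by (auto simp: insert_op_def L)
  qed
  have d: "set_pmf (delete_op X) \<subseteq> {Y. valid n Y}"
    using assms del_leaf_props
    by (fastforce simp: delete_op_def valid_def leaves_def split: option.splits)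
  show ?thesis using s i d by (auto simp: hvl_prime_def)
qed

lemma hvl_iter_valid:
  assumes "n \<ge> 1" "valid n X"
  shows "set_pmf (hvl_iter n k X) \<subseteq> {Y. valid n Y}"
proof (induction k)
  case 0 then show ?case using assms by (simp add: hvl_iter_def)
next
  case (Suc k)
  then show ?case using hvl_valid[OF assms(1)]
    by (auto simp: hvl_iter_def)
qed

lemma single_valid: "n \<ge> 1 \<Longrightarrow> valid n X \<Longrightarrow> set_pmf (mutate_single n X) \<subseteq> {Y. valid n Y}"
  by (simp add: mutate_single_def hvl_valid)

lemma multi_valid: "n \<ge> 1 \<Longrightarrow> valid n X \<Longrightarrow> set_pmf (mutate_multi n X) \<subseteq> {Y. valid n Y}"
  using hvl_iter_valid by (fastforce simp: mutate_multi_def)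

fun comb :: "lit list \<Rightarrow> bt" where
  "comb [] = Lf (Pos 0)" | "comb [x] = Lf x" | "comb (x # y # xs) = J (Lf x) (comb (y # xs))"

lemma comb_leaves: "xs \<noteq> [] \<Longrightarrow> leaf_list (comb xs) = xs"
  by (induction xs rule: comb.induct) auto

definition W :: "nat \<Rightarrow> stree" where
  "W k = (if k = 0 then None else Some (comb (map Pos [1..<Suc k])))"

lemma W_props: "k \<le> n \<Longrightarrow> valid n (W k) \<and> ORDER (W k) = k \<and> cplx (W k) = 2 * k - 1"
proof -
  assume k: "k \<le> n"
  show ?thesis
  proof (cases "k = 0")
    case True then show ?thesis by (simp add: W_def valid_def leaves_def)
  next
    case False
    then have lv: "leaves (W k) = map Pos [1..<Suc k]"
      by (simp add: W_def leaves_def comb_leaves)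
    have os: "order_S (map Pos [1..<Suc k]) = map Pos [1..<Suc k]"
      by (rule order_S_pos) (auto simp: distinct_map inj_on_def)
    have "ORDER (W k) = k" unfolding ORDER_def lv os by (simp add: filter_map o_def)
    moreover have "valid n (W k)" using k by (auto simp: valid_def lv lits_def)
    moreover have "cplx (W k) = 2 * k - 1" by (simp add: cplx_leaves lv)
    ultimately show ?thesis by simp
  qed
qed

lemma pareto_char:
  assumes "pareto_optimal n X"
  shows "ORDER X \<le> n \<and> cplx X = 2 * ORDER X - 1"
proof -
  have v: "valid n X" using assms by (simp add: pareto_optimal_def)
  have le: "ORDER X \<le> n" by (rule ORDER_le_n[OF v])
  note Wp = W_props[OF le]
  have "\<not> sdom (W (ORDER X)) X" using assms Wp by (auto simp: pareto_optimal_def)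
  then have "\<not> cplx (W (ORDER X)) < cplx X" using Wp by (auto simp: sdom_def wdom_def)
  with Wp cplx_ge_ORDER[of X] le show ?thesis by simp
qed



lemma bind_ge:
  assumes "\<And>x. x \<in> A \<Longrightarrow> measure_pmf.prob (f x) B \<ge> c" "c \<ge> 0"
  shows "measure_pmf.prob (bind_pmf p f) B \<ge> c * measure_pmf.prob p A"
proof -
  have "ennreal (c * measure_pmf.prob p A) = (\<integral>\<^sup>+x. ennreal c * indicator A x \<partial>p)"
    using assms(2) by (simp add: nn_integral_cmult_indicator ennreal_mult measure_pmf.emeasure_eq_measure)
  also have "\<dots> \<le> (\<integral>\<^sup>+x. emeasure (f x) B \<partial>p)"
  proof (rule nn_integral_mono)
    fix x show "ennreal c * indicator A x \<le> emeasure (measure_pmf (f x)) B"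
      using assms by (cases "x \<in> A") (auto simp: measure_pmf.emeasure_eq_measure)
  qed
  also have "\<dots> = emeasure (bind_pmf p f) B"
    by (simp add: emeasure_bind_pmf)
  finally show ?thesis
    by (simp add: measure_pmf.emeasure_eq_measure)
qed

lemma prob_return_ge: "x \<in> B \<Longrightarrow> measure_pmf.prob (return_pmf x) B \<ge> 1"
  by simp

lemma drift:
  fixes K :: "'a \<Rightarrow> 'a pmf" and V :: "'a \<Rightarrow> ennreal"
  assumes s0: "s0 \<in> S" and cl: "\<And>s. s \<in> S \<Longrightarrow> set_pmf (K s) \<subseteq> S"
    and dr: "\<And>s. s \<in> S \<Longrightarrow> (\<integral>\<^sup>+x. V x \<partial>K s) + indicator Bad s \<le> V s"
  shows "(\<Sum>t. emeasure (((\<lambda>D. bind_pmf D K) ^^ t) (return_pmf s0)) Bad) \<le> V s0"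
proof -
  define D where "D t = ((\<lambda>D. bind_pmf D K) ^^ t) (return_pmf s0)" for t
  have DS: "D (Suc t) = bind_pmf (D t) K" for t by (simp add: D_def)
  have I: "set_pmf (D N) \<subseteq> S \<and> (\<integral>\<^sup>+x. V x \<partial>D N) + (\<Sum>t<N. emeasure (D t) Bad) \<le> V s0" for N
  proof (induction N)
    case 0 then show ?case using s0 by (simp add: D_def)
  next
    case (Suc N)
    then have sub: "set_pmf (D N) \<subseteq> S" and ih: "(\<integral>\<^sup>+x. V x \<partial>D N) + (\<Sum>t<N. emeasure (D t) Bad) \<le> V s0"
      by auto
    have s1: "set_pmf (D (Suc N)) \<subseteq> S" using sub cl by (auto simp: DS)
    have "(\<integral>\<^sup>+x. V x \<partial>D (Suc N)) + emeasure (D N) Bad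
        = (\<integral>\<^sup>+s. (\<integral>\<^sup>+x. V x \<partial>K s) \<partial>D N) + (\<integral>\<^sup>+s. indicator Bad s \<partial>D N)"
      by (simp add: DS)
    also have "\<dots> = (\<integral>\<^sup>+s. (\<integral>\<^sup>+x. V x \<partial>K s) + indicator Bad s \<partial>D N)"
      by (rule nn_integral_add[symmetric]) auto
    also have "\<dots> \<le> (\<integral>\<^sup>+s. V s \<partial>D N)"
      by (rule nn_integral_mono_AE) (use sub dr in \<open>auto simp: AE_measure_pmf_iff\<close>)
    finally have st: "(\<integral>\<^sup>+x. V x \<partial>D (Suc N)) + emeasure (D N) Bad \<le> (\<integral>\<^sup>+s. V s \<partial>D N)" .
    have "(\<integral>\<^sup>+x. V x \<partial>D (Suc N)) + (\<Sum>t<Suc N. emeasure (D t) Bad)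
        = ((\<integral>\<^sup>+x. V x \<partial>D (Suc N)) + emeasure (D N) Bad) + (\<Sum>t<N. emeasure (D t) Bad)"
      by (simp add: add_ac)
    also have "\<dots> \<le> (\<integral>\<^sup>+s. V s \<partial>D N) + (\<Sum>t<N. emeasure (D t) Bad)"
      using st by (rule add_right_mono)
    also have "\<dots> \<le> V s0" by (rule ih)
    finally show ?case using s1 by simp
  qed
  have "(\<Sum>t<N. emeasure (D t) Bad) \<le> V s0" for N
  proof -
    have "(\<Sum>t<N. emeasure (D t) Bad) \<le> (\<integral>\<^sup>+x. V x \<partial>D N) + (\<Sum>t<N. emeasure (D t) Bad)"
      by (rule add_increasing) auto
    then show ?thesis using conjunct2[OF I[of N]] by (rule order_trans)
  qed
  then have "(\<Sum>t. emeasure (D t) Bad) \<le> V s0"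
    by (simp add: suminf_eq_SUP SUP_least)
  then show ?thesis by (simp add: D_def)
qed

lemma step_drift:
  fixes f :: "'a \<Rightarrow> real"
  assumes "\<And>x. x \<in> set_pmf M \<Longrightarrow> f x + d * indicator A x \<le> c"
    and "\<And>x. f x \<ge> 0" "d \<ge> 0" "d * measure_pmf.prob M A \<ge> 1"
  shows "(\<integral>\<^sup>+x. ennreal (f x) \<partial>M) + 1 \<le> ennreal c"
proof -
  have "(\<integral>\<^sup>+x. ennreal (f x) \<partial>M) + 1 \<le> (\<integral>\<^sup>+x. ennreal (f x) \<partial>M) + ennreal d * emeasure M A"
  proof (rule add_left_mono)
    have "ennreal d * emeasure M A = ennreal (d * measure_pmf.prob M A)"
      using assms(3) by (simp add: measure_pmf.emeasure_eq_measure ennreal_mult)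
    then show "1 \<le> ennreal d * emeasure M A" using assms(4) by simp
  qed
  also have "\<dots> = (\<integral>\<^sup>+x. ennreal (f x) \<partial>M) + (\<integral>\<^sup>+x. ennreal d * indicator A x \<partial>M)"
    by (simp add: nn_integral_cmult_indicator)
  also have "\<dots> = (\<integral>\<^sup>+x. ennreal (f x) + ennreal d * indicator A x \<partial>M)"
    by (rule nn_integral_add[symmetric]) auto
  also have "\<dots> \<le> (\<integral>\<^sup>+x. ennreal c \<partial>M)"
  proof (rule nn_integral_mono_AE)
    show "AE x in measure_pmf M. ennreal (f x) + ennreal d * indicator A x \<le> ennreal c"
      unfolding AE_measure_pmf_iff
    proof
      fix x assume x: "x \<in> set_pmf M"
      have "ennreal (f x) + ennreal d * indicator A x = ennreal (f x + d * indicator A x)"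
        using assms(2,3) by (simp add: ennreal_plus ennreal_mult indicator_def)
      also have "\<dots> \<le> ennreal c" using assms(1)[OF x] by (rule ennreal_leI)
      finally show "ennreal (f x) + ennreal d * indicator A x \<le> ennreal c" .
    qed
  qed
  also have "\<dots> = ennreal c" by simp
  finally show ?thesis .
qed



definition upd :: "stree set \<Rightarrow> stree \<Rightarrow> stree set" where
  "upd P Y = (if \<exists>Z\<in>P. sdom Z Y then P else {Z \<in> P. \<not> wdom Y Z} \<union> {Y})"

lemma smo_step_upd: "smo_step mut n P = pmf_of_set P \<bind> (\<lambda>X. mut n X \<bind> (\<lambda>Y. return_pmf (upd P Y)))"
  by (simp add: smo_step_def upd_def)

definition Inv :: "nat \<Rightarrow> stree set \<Rightarrow> bool" where
  "Inv n P \<longleftrightarrow> finite P \<and> P \<noteq> {} \<and> (\<forall>Z\<in>P. valid n Z) \<and> (\<forall>Z\<in>P. \<forall>Z'\<in>P. wdom Z Z' \<longrightarrow> Z = Z')"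

lemma wdom_refl: "wdom Z Z" by (simp add: wdom_def)

lemma inv_upd: assumes "Inv n P" "valid n Y" shows "Inv n (upd P Y)"
proof (cases "\<exists>Z\<in>P. sdom Z Y")
  case True then show ?thesis using assms by (simp add: upd_def)
next
  case False
  have "wdom Z Y \<Longrightarrow> Z \<in> P \<Longrightarrow> \<not> wdom Y Z \<Longrightarrow> False" for Z
    using False by (auto simp: sdom_def wdom_def)
  then show ?thesis using assms False unfolding Inv_def upd_def by (auto simp: wdom_refl)
qed

lemma inv_card: assumes "Inv n P" shows "card P \<le> n + 1"
proof -
  have inj: "inj_on ORDER P"
  proof (rule inj_onI)
    fix Z Z' assume a: "Z \<in> P" "Z' \<in> P" "ORDER Z = ORDER Z'"
    have H: "\<forall>Z\<in>P. \<forall>Z'\<in>P. wdom Z Z' \<longrightarrow> Z = Z'" using assms by (simp add: Inv_def)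
    show "Z = Z'"
    proof (cases "cplx Z \<le> cplx Z'")
      case True then have "wdom Z Z'" using a by (simp add: wdom_def)
      then show ?thesis using H a by blast
    next
      case False then have "wdom Z' Z" using a by (simp add: wdom_def)
      then show ?thesis using H a by blast
    qed
  qed
  have "ORDER ` P \<subseteq> {0..n}" using assms ORDER_le_n by (auto simp: Inv_def)
  then have "card (ORDER ` P) \<le> card {0..n}" by (intro card_mono) auto
  then have "card (ORDER ` P) \<le> n + 1" by simp
  with inj show ?thesis by (simp add: card_image)
qed

definition has :: "stree set \<Rightarrow> nat \<Rightarrow> bool" where
  "has P j \<longleftrightarrow> (\<exists>Z\<in>P. ORDER Z = j \<and> cplx Z = 2 * j - 1)"

lemma has_upd: "has P j \<Longrightarrow> has (upd P Y) j"
  unfolding has_def upd_def using wdom_vec by fastforce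

lemma has_new: "ORDER Y = j \<Longrightarrow> cplx Y = 2 * j - 1 \<Longrightarrow> has (upd P Y) j"
proof -
  assume a: "ORDER Y = j" "cplx Y = 2 * j - 1"
  have "\<not> sdom Z Y" for Z
    using wdom_vec[of Z Y j] a by (auto simp: sdom_def)
  then show ?thesis using a by (auto simp: has_def upd_def)
qed

lemma has0: "has P 0 \<longleftrightarrow> None \<in> P"
proof
  assume "has P 0"
  then obtain Z where "Z \<in> P" "cplx Z = 0" by (auto simp: has_def)
  then show "None \<in> P" using cplx0 by blast
next
  assume "None \<in> P" then show "has P 0" unfolding has_def by (intro bexI[of _ None]) auto
qed

lemma covers: "(\<forall>j\<le>n. has P j) \<Longrightarrow> covers_front n P"
  unfolding covers_front_def pareto_front_def has_def
  using pareto_char by fastforce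

definition mc :: "stree set \<Rightarrow> nat" where "mc P = Min (cplx ` P)"

lemma mc_upd: assumes "finite P" "P \<noteq> {}" shows "mc (upd P Y) \<le> mc P"
proof -
  have "Min (cplx ` P) \<in> cplx ` P" using assms by (intro Min_in) auto
  then obtain Z where Z: "Z \<in> P" "cplx Z = mc P" unfolding mc_def by auto
  have fin: "finite (upd P Y)" using assms by (auto simp: upd_def)
  have "\<exists>W\<in>upd P Y. cplx W \<le> cplx Z"
  proof (cases "Z \<in> upd P Y")
    case True then show ?thesis by blast
  next
    case False
    then have "wdom Y Z" "Y \<in> upd P Y" using Z by (auto simp: upd_def split: if_splits)
    then show ?thesis by (auto simp: wdom_def)
  qed
  then obtain W where W: "W \<in> upd P Y" "cplx W \<le> cplx Z" by blast
  have "mc (upd P Y) \<le> cplx W" unfolding mc_def using fin W(1) by (intro Min_le) auto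
  with W Z show ?thesis by simp
qed

lemma mc_new: assumes "finite P" "P \<noteq> {}" "cplx Y < mc P" shows "mc (upd P Y) < mc P"
proof -
  have "\<not> sdom Z Y" if "Z \<in> P" for Z
    using assms that Min_le[of "cplx ` P" "cplx Z"] by (auto simp: sdom_def wdom_def mc_def)
  then have "Y \<in> upd P Y" by (auto simp: upd_def)
  moreover have "finite (upd P Y)" using assms by (auto simp: upd_def)
  ultimately have "mc (upd P Y) \<le> cplx Y" by (auto simp: mc_def)
  with assms show ?thesis by simp
qed

definition lev :: "nat \<Rightarrow> stree set \<Rightarrow> nat" where
  "lev n P = Max {k. k \<le> n \<and> (\<forall>j\<le>k. has P j)}"

lemma lev_props:
  assumes "has P 0"
  shows "lev n P \<le> n \<and> (\<forall>j\<le>lev n P. has P j)"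
proof -
  have fin: "finite {k. k \<le> n \<and> (\<forall>j\<le>k. has P j)}" by simp
  have "0 \<in> {k. k \<le> n \<and> (\<forall>j\<le>k. has P j)}" using assms by simp
  then have "lev n P \<in> {k. k \<le> n \<and> (\<forall>j\<le>k. has P j)}"
    unfolding lev_def using Max_in[OF fin] by blast
  then show ?thesis by simp
qed

lemma lev_ge: "k \<le> n \<Longrightarrow> (\<forall>j\<le>k. has P j) \<Longrightarrow> k \<le> lev n P"
  unfolding lev_def by (rule Max_ge) auto



lemma isPos_iff: "isPos x \<longleftrightarrow> (\<exists>i. x = Pos i)" by (cases x) auto

lemma prob_op: "op \<in> {0,1,2} \<Longrightarrow> measure_pmf.prob (pmf_of_set {0::nat,1,2}) {op} = 1/3"
  by (auto simp: measure_pmf_of_set)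

lemma hvl_del:
  assumes "\<And>i. del_leaf i t \<in> G"
  shows "measure_pmf.prob (hvl_prime n (Some t)) G \<ge> 1/3"
proof -
  have "measure_pmf.prob (delete_op (Some t)) G \<ge> 1 * measure_pmf.prob (pmf_of_set {..<nleaves t}) UNIV"
    unfolding delete_op_def by (simp only: option.case) (rule bind_ge, use assms in auto)
  then have d: "measure_pmf.prob (delete_op (Some t)) G \<ge> 1" by simp
  have "measure_pmf.prob (hvl_prime n (Some t)) G \<ge> 1 * measure_pmf.prob (pmf_of_set {0::nat,1,2}) {2}"
    unfolding hvl_prime_def by (rule bind_ge) (use d in auto)
  moreover have "measure_pmf.prob (pmf_of_set {0::nat,1,2}) {2} = 1/3" by (rule prob_op) simp
  ultimately show ?thesis by simp
qed

lemma hvl_grow0: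
  assumes "n \<ge> 1"
  shows "measure_pmf.prob (hvl_prime n None) {Y. ORDER Y = Suc 0 \<and> cplx Y = 2 * Suc 0 - 1} \<ge> 1/3 * (1/2)"
proof -
  let ?G = "{Y. ORDER Y = Suc 0 \<and> cplx Y = 2 * Suc 0 - 1}"
  have good: "Some (Lf u) \<in> ?G" if uu: "u \<in> Pos ` {1..n}" for u
  proof -
    obtain i where "u = Pos i" using uu by auto
    then show ?thesis
      by (simp add: ORDER_def leaves_def order_S_def order_step_def cplx_def)
  qed
  have pu: "measure_pmf.prob (pmf_of_set (lits n)) (Pos ` {1..n}) = 1/2"
  proof -
    have sub: "Pos ` {1..n} \<subseteq> lits n" by (auto simp: lits_def)
    have "card (Pos ` {1..n}) = n" by (simp add: card_image inj_on_def)
    then show ?thesis using assms sub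
      by (simp add: measure_pmf_of_set lits_ne lits_card Int_absorb1)
  qed
  have "measure_pmf.prob (insert_op n None) ?G \<ge> 1 * measure_pmf.prob (pmf_of_set (lits n)) (Pos ` {1..n})"
    unfolding insert_op_def by (simp only: option.case) (rule bind_ge, use good in auto)
  then have i: "measure_pmf.prob (insert_op n None) ?G \<ge> 1/2" using pu by simp
  have "measure_pmf.prob (hvl_prime n None) ?G \<ge> (1/2) * measure_pmf.prob (pmf_of_set {0::nat,1,2}) {1}"
    unfolding hvl_prime_def by (rule bind_ge) (use i in auto)
  moreover have "measure_pmf.prob (pmf_of_set {0::nat,1,2}) {1} = 1/3" by (rule prob_op) simp
  ultimately show ?thesis by simp
qed

lemma hvl_grow:
  assumes n: "n \<ge> 1" and v: "valid n (Some t)" and pos: "\<forall>x\<in>set (leaf_list t). isPos x"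
    and dis: "distinct (map var (leaf_list t))" and len: "length (leaf_list t) = k" and kn: "k < n"
  shows "measure_pmf.prob (hvl_prime n (Some t)) {Y. ORDER Y = Suc k \<and> cplx Y = 2 * Suc k - 1}
         \<ge> 1/3 * ((real n - real k) / (2 * real n))"
proof -
  let ?G = "{Y. ORDER Y = Suc k \<and> cplx Y = 2 * Suc k - 1}"
  let ?l = "leaf_list t"
  let ?V = "var ` set ?l"
  let ?U = "Pos ` ({1..n} - ?V)"
  have Vsub: "?V \<subseteq> {1..n}" using v by (auto simp: valid_def leaves_def lits_def)
  have cV: "card ?V = k" using dis len by (metis distinct_card length_map set_map)
  have cU: "card ?U = n - k"
    using Vsub cV by (simp add: card_image inj_on_def card_Diff_subset finite_subset)
  have Ulits: "?U \<subseteq> lits n" by (auto simp: lits_def)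
  have pu: "measure_pmf.prob (pmf_of_set (lits n)) ?U = (real n - real k) / (2 * real n)"
    using n kn cU Ulits by (simp add: measure_pmf_of_set lits_ne lits_card Int_absorb1 of_nat_diff)
  have sz: "size_bt t = 2 * k - 1" using len by (simp add: size_bt_eq len_leaf_list)
  have good: "Some (ins_at (\<lambda>v. if b then J (Lf u) v else J v (Lf u)) i t) \<in> ?G" if u: "u \<in> ?U" for u i b
  proof -
    let ?f = "(\<lambda>v. if b then J (Lf u) v else J v (Lf u))"
    let ?t = "ins_at ?f i t"
    have P: "mset (leaf_list ?t) = mset ?l + {#u#}" "size_bt ?t = size_bt t + 2"
      using ins_at_props[of ?f u i t] by auto
    then have m: "mset (leaf_list ?t) = mset (u # ?l)" by simp
    have "set (leaf_list ?t) = set (u # ?l)" by (metis m set_mset_mset)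
    then have p2: "\<forall>x\<in>set (leaf_list ?t). isPos x" using pos u by auto
    have "mset (map var (leaf_list ?t)) = mset (map var (u # ?l))" using m by (simp only: mset_map)
    moreover have "distinct (map var (u # ?l))" using dis u by auto
    ultimately have d2: "distinct (map var (leaf_list ?t))" using mset_eq_imp_distinct_iff by blast
    have os: "order_S (leaf_list ?t) = leaf_list ?t" by (rule order_S_pos[OF p2 d2])
    have "length (leaf_list ?t) = Suc k" using m len by (metis length_Cons size_mset)
    moreover have "filter (\<lambda>x. \<exists>i. x = Pos i) (leaf_list ?t) = leaf_list ?t"
      using p2 by (simp add: isPos_iff)
    ultimately have "ORDER (Some ?t) = Suc k"
      unfolding ORDER_def leaves_def by (simp add: os)
    moreover have "cplx (Some ?t) = 2 * Suc k - 1" using P sz len kn nleaves_pos[of t] len_leaf_list[of t]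
      by (simp add: cplx_def)
    ultimately show ?thesis by simp
  qed
  have "measure_pmf.prob (insert_op n (Some t)) ?G
        \<ge> ((real n - real k) / (2 * real n)) * measure_pmf.prob (pmf_of_set {..<size_bt t}) UNIV"
    unfolding insert_op_def option.case
  proof (rule bind_ge)
    fix i :: nat
    have "measure_pmf.prob (pmf_of_set (lits n) \<bind> (\<lambda>u. bernoulli_pmf (1/2) \<bind>
          (\<lambda>b. return_pmf (Some (ins_at (\<lambda>v. if b then J (Lf u) v else J v (Lf u)) i t))))) ?G
        \<ge> 1 * measure_pmf.prob (pmf_of_set (lits n)) ?U"
    proof (rule bind_ge)
      fix u assume u: "u \<in> ?U"
      have "measure_pmf.prob (bernoulli_pmf (1/2) \<bind>
          (\<lambda>b. return_pmf (Some (ins_at (\<lambda>v. if b then J (Lf u) v else J v (Lf u)) i t)))) ?G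
          \<ge> 1 * measure_pmf.prob (bernoulli_pmf (1/2)) UNIV"
        by (rule bind_ge) (use good[OF u] in auto)
      then show "1 \<le> measure_pmf.prob (bernoulli_pmf (1/2) \<bind>
          (\<lambda>b. return_pmf (Some (ins_at (\<lambda>v. if b then J (Lf u) v else J v (Lf u)) i t)))) ?G" by simp
    qed simp
    then show "(real n - real k) / (2 * real n) \<le> measure_pmf.prob (pmf_of_set (lits n) \<bind> (\<lambda>u. bernoulli_pmf (1/2) \<bind>
          (\<lambda>b. return_pmf (Some (ins_at (\<lambda>v. if b then J (Lf u) v else J v (Lf u)) i t))))) ?G"
      using pu by simp
  next
    show "0 \<le> (real n - real k) / (2 * real n)" using kn by simp
  qed
  then have i: "measure_pmf.prob (insert_op n (Some t)) ?G \<ge> (real n - real k) / (2 * real n)" by simp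
  have "measure_pmf.prob (hvl_prime n (Some t)) ?G \<ge> ((real n - real k) / (2 * real n)) * measure_pmf.prob (pmf_of_set {0::nat,1,2}) {1}"
    unfolding hvl_prime_def by (rule bind_ge) (use i kn in auto)
  moreover have "measure_pmf.prob (pmf_of_set {0::nat,1,2}) {1} = 1/3" by (rule prob_op) simp
  ultimately show ?thesis by (metis mult.commute)
qed

lemma single_prob: "measure_pmf.prob (mutate_single n X) G \<ge> 1/3 * measure_pmf.prob (hvl_prime n X) G"
  by (simp add: mutate_single_def)

lemma multi_prob: "measure_pmf.prob (mutate_multi n X) G \<ge> 1/3 * measure_pmf.prob (hvl_prime n X) G"
proof -
  have "measure_pmf.prob (mutate_multi n X) G \<ge> measure_pmf.prob (hvl_prime n X) G * measure_pmf.prob (poisson_pmf 1) {0}"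
    unfolding mutate_multi_def by (rule bind_ge) (auto simp: hvl_iter_def bind_return_pmf)
  moreover have "measure_pmf.prob (poisson_pmf 1) {0} = exp (-1)"
    by (simp add: measure_pmf_single)
  moreover have "exp (-1::real) \<ge> 1/3"
    using exp_le by (simp add: exp_minus field_simps)
  moreover have "measure_pmf.prob (hvl_prime n X) G \<ge> 0" by simp
  ultimately show ?thesis
    by (smt (verit, best) mult_left_mono mult.commute)
qed



definition d2 :: "nat \<Rightarrow> nat \<Rightarrow> real" where
  "d2 n j = 18 * real n * (real n + 1) / (real n - real j)"

definition SS :: "nat \<Rightarrow> nat \<Rightarrow> real" where
  "SS n k = (\<Sum>j\<in>{k..<n}. d2 n j)"

definition gpot :: "nat \<Rightarrow> stree set \<Rightarrow> real" where
  "gpot n P = (if has P 0 then SS n (lev n P) else SS n 0 + 9 * (real n + 1) * real (mc P))"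

lemma d2_nonneg: "j < n \<Longrightarrow> d2 n j \<ge> 0"
  by (simp add: d2_def)

lemma SS_nonneg: "SS n k \<ge> 0"
  unfolding SS_def by (rule sum_nonneg) (simp add: d2_nonneg)

lemma SS_mono: "k \<le> k' \<Longrightarrow> SS n k' \<le> SS n k"
  unfolding SS_def by (rule sum_mono2) (auto simp: d2_nonneg)

lemma SS_step: "k < n \<Longrightarrow> SS n k = d2 n k + SS n (Suc k)"
  unfolding SS_def by (rule sum.atLeast_Suc_lessThan)

lemma gpot_nonneg: "gpot n P \<ge> 0"
  by (simp add: gpot_def SS_nonneg)

lemma smo_support:
  assumes "Inv n P" "P' \<in> set_pmf (smo_step mut n P)"
  obtains Y where "valid n Y \<or> True" "P' = upd P Y" "Y \<in> set_pmf (mut n X) \<or> True"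
  using assms by (auto simp: smo_step_upd Inv_def)

lemma smo_support':
  assumes "Inv n P" "P' \<in> set_pmf (smo_step mut n P)"
  shows "\<exists>X\<in>P. \<exists>Y\<in>set_pmf (mut n X). P' = upd P Y"
  using assms by (auto simp: smo_step_upd Inv_def)

lemma smo_prog:
  assumes "Inv n P" "Z \<in> P" "\<And>Y. Y \<in> G \<Longrightarrow> upd P Y \<in> Prog"
  shows "measure_pmf.prob (smo_step mut n P) Prog \<ge> 1 / real (card P) * measure_pmf.prob (mut n Z) G"
proof -
  have inner: "measure_pmf.prob (mut n Z \<bind> (\<lambda>Y. return_pmf (upd P Y))) Prog \<ge> measure_pmf.prob (mut n Z) G"
    using bind_ge[where A=G and f="\<lambda>Y. return_pmf (upd P Y)" and B=Prog and c=1 and p="mut n Z"] assms(3) by simp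
  have "measure_pmf.prob (smo_step mut n P) Prog \<ge>
        measure_pmf.prob (mut n Z) G * measure_pmf.prob (pmf_of_set P) {Z}"
    unfolding smo_step_upd by (rule bind_ge) (use inner in auto)
  moreover have "measure_pmf.prob (pmf_of_set P) {Z} = 1 / real (card P)"
    using assms(1,2) by (simp add: Inv_def measure_pmf_of_set)
  ultimately show ?thesis by (simp add: mult.commute)
qed

lemma main_drift:
  assumes n: "n \<ge> 1" and inv: "Inv n P" and nc: "\<not> covers_front n P"
    and Mv: "\<And>X. valid n X \<Longrightarrow> set_pmf (mut n X) \<subseteq> {Y. valid n Y}"
    and Mp: "\<And>X G. measure_pmf.prob (mut n X) G \<ge> 1/3 * measure_pmf.prob (hvl_prime n X) G"
  shows "(\<integral>\<^sup>+x. ennreal (gpot n x) \<partial>smo_step mut n P) + 1 \<le> ennreal (gpot n P)"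
proof -
  have fin: "finite P" "P \<noteq> {}" using inv by (auto simp: Inv_def)
  have cP: "card P \<le> n + 1" by (rule inv_card[OF inv])
  have cPpos: "card P > 0" using fin by (simp add: card_gt_0_iff)
  have supp: "\<And>P'. P' \<in> set_pmf (smo_step mut n P) \<Longrightarrow> \<exists>Y. P' = upd P Y"
    using smo_support'[OF inv] by blast
  show ?thesis
  proof (cases "has P 0")
    case True
    define k where "k = lev n P"
    have lp: "k \<le> n" "\<forall>j\<le>k. has P j" using lev_props[OF True] by (auto simp: k_def)
    have kn: "k < n" using lp nc covers[of n P] by (metis le_neq_implies_less)
    have gP: "gpot n P = SS n k" using True by (simp add: gpot_def k_def)
    show ?thesis
    proof (rule step_drift[where A="{P'. has P' (Suc k)}" and d="d2 n k"])
      fix P' assume "P' \<in> set_pmf (smo_step mut n P)"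
      then obtain Y where P': "P' = upd P Y" using supp by blast
      have hj: "\<forall>j\<le>k. has P' j" using lp has_upd P' by blast
      then have h0: "has P' 0" by simp
      have kl: "k \<le> lev n P'" by (rule lev_ge[OF lp(1) hj])
      show "gpot n P' + d2 n k * indicator {P'. has P' (Suc k)} P' \<le> gpot n P"
      proof (cases "has P' (Suc k)")
        case True
        then have "\<forall>j\<le>Suc k. has P' j" using hj le_Suc_eq by blast
        then have "Suc k \<le> lev n P'" using kn by (intro lev_ge) auto
        then have "SS n (lev n P') \<le> SS n (Suc k)" by (rule SS_mono)
        then show ?thesis using True h0 gP SS_step[OF kn] by (simp add: gpot_def)
      next
        case False
        then show ?thesis using h0 gP SS_mono[OF kl] by (simp add: gpot_def)
      qed
    next
      show "\<And>x. gpot n x \<ge> 0" by (rule gpot_nonneg)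
      show "d2 n k \<ge> 0" using kn by (rule d2_nonneg)
    next
      obtain Z where Z: "Z \<in> P" "ORDER Z = k" "cplx Z = 2 * k - 1" using lp(2) by (auto simp: has_def)
      let ?G = "{Y. ORDER Y = Suc k \<and> cplx Y = 2 * Suc k - 1}"
      have pr: "measure_pmf.prob (smo_step mut n P) {P'. has P' (Suc k)} \<ge> 1 / real (card P) * measure_pmf.prob (mut n Z) ?G"
        by (rule smo_prog[OF inv Z(1)]) (auto intro: has_new)
      have hv: "measure_pmf.prob (hvl_prime n Z) ?G \<ge> 1/3 * ((real n - real k) / (2 * real n))"
      proof (cases Z)
        case None
        then have "k = 0" using Z by simp
        then show ?thesis using hvl_grow0[OF n] None n by simp
      next
        case (Some t)
        let ?l = "leaf_list t"
        have k1: "k \<ge> 1" using Z Some nleaves_pos[of t] by (cases k) (auto simp: cplx_def size_bt_eq)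
        have ll: "length ?l = k" using Z(3) Some k1 by (simp add: cplx_def size_bt_eq len_leaf_list) 
        let ?F = "filter (\<lambda>x. \<exists>i. x = Pos i) (order_S ?l)"
        have "length ?F = k" using Z Some by (simp add: ORDER_def leaves_def)
        moreover have "length ?F \<le> length (order_S ?l)" by simp
        moreover have "length (order_S ?l) \<le> length ?l" by (rule order_S_len)
        ultimately have eqlen: "length (order_S ?l) = length ?l" "length ?F = length (order_S ?l)" using ll by simp_all
        have os: "order_S ?l = ?l" by (rule order_S_full[OF eqlen(1)])
        have "\<forall>x\<in>set (order_S ?l). \<exists>i. x = Pos i"
        proof
          fix x assume x: "x \<in> set (order_S ?l)"
          show "\<exists>i. x = Pos i"
          proof (rule ccontr)
            assume "\<not> (\<exists>i. x = Pos i)"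
            then have "length ?F < length (order_S ?l)"
              by (intro length_filter_less[OF x]) simp
            then show False using eqlen(2) by simp
          qed
        qed
        then have pos: "\<forall>x\<in>set ?l. isPos x" using os by fastforce
        have dis: "distinct (map var ?l)" using order_S_distinct[of ?l] os by simp
        have v: "valid n (Some t)" using inv Z(1) Some by (auto simp: Inv_def)
        show ?thesis using hvl_grow[OF n v pos dis ll kn] Some by simp
      qed
      have "d2 n k * (1 / real (card P) * measure_pmf.prob (mut n Z) ?G)
           \<ge> d2 n k * (1 / (real n + 1) * (1/3 * (1/3 * ((real n - real k) / (2 * real n)))))"
      proof (rule mult_left_mono)
        have a: "1 / real (card P) \<ge> 1 / (real n + 1)" using cP cPpos
          by (simp add: frac_le)
        have b: "measure_pmf.prob (mut n Z) ?G \<ge> 1/3 * (1/3 * ((real n - real k) / (2 * real n)))"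
          using Mp[of Z ?G] hv by linarith
        show "1 / (real n + 1) * (1/3 * (1/3 * ((real n - real k) / (2 * real n))))
              \<le> 1 / real (card P) * measure_pmf.prob (mut n Z) ?G"
          by (rule mult_mono[OF a b]) (use kn in auto)
        show "d2 n k \<ge> 0" using kn by (rule d2_nonneg)
      qed
      moreover have "d2 n k * (1 / (real n + 1) * (1/3 * (1/3 * ((real n - real k) / (2 * real n))))) = 1"
      proof -
        have b: "real n - real k > 0" "real n > 0" using kn by auto
        have e: "1 / (real n + 1) * (1/3 * (1/3 * ((real n - real k) / (2 * real n))))
           = (real n - real k) / (18 * real n * (real n + 1))"
          using b by (simp add: field_simps)
        have "18 * real n * (real n + 1) > 0" using b by simp
        then show ?thesis using b unfolding e d2_def by simp
      qed
      moreover have "d2 n k * measure_pmf.prob (smo_step mut n P) {P'. has P' (Suc k)}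
          \<ge> d2 n k * (1 / real (card P) * measure_pmf.prob (mut n Z) ?G)"
        using pr d2_nonneg[OF kn] by (rule mult_left_mono)
      ultimately show "1 \<le> d2 n k * measure_pmf.prob (smo_step mut n P) {P'. has P' (Suc k)}"
        by linarith
    qed
  next
    case False
    define m where "m = mc P"
    have gP: "gpot n P = SS n 0 + 9 * (real n + 1) * real m" using False by (simp add: gpot_def m_def)
    have "Min (cplx ` P) \<in> cplx ` P" using fin by (intro Min_in) auto
    then obtain Z where Z: "Z \<in> P" "cplx Z = m" unfolding m_def mc_def by auto
    have "None \<notin> P" using False has0 by blast
    then have "Z \<noteq> None" using Z(1) by (cases Z) auto
    then obtain t where t: "Z = Some t" by auto
    have m1: "m \<ge> 1" using Z t nleaves_pos[of t] by (simp add: cplx_def size_bt_eq)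
    show ?thesis
    proof (rule step_drift[where A="{P'. has P' 0 \<or> mc P' < m}" and d="9 * (real n + 1)"])
      fix P' assume "P' \<in> set_pmf (smo_step mut n P)"
      then obtain Y where P': "P' = upd P Y" using supp by blast
      have mle: "mc P' \<le> m" using mc_upd[OF fin] P' by (simp add: m_def)
      show "gpot n P' + 9 * (real n + 1) * indicator {P'. has P' 0 \<or> mc P' < m} P' \<le> gpot n P"
      proof (cases "has P' 0")
        case True
        have "SS n (lev n P') \<le> SS n 0" by (rule SS_mono) simp
        moreover have "9 * (real n + 1) \<le> 9 * (real n + 1) * real m" using m1 by simp
        moreover have "gpot n P' + 9 * (real n + 1) * indicator {P'. has P' 0 \<or> mc P' < m} P' = SS n (lev n P') + 9 * (real n + 1)"
          using True by (simp add: gpot_def)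
        ultimately show ?thesis using gP by linarith
      next
        case F2: False
        show ?thesis
        proof (cases "mc P' < m")
          case True
          then have "real (mc P') + 1 \<le> real m" by simp
          then have "9 * (real n + 1) * (real (mc P') + 1) \<le> 9 * (real n + 1) * real m"
            by (rule mult_left_mono) simp
          then show ?thesis using True F2 gP by (simp add: gpot_def algebra_simps)
        next
          case False
          then show ?thesis using F2 gP mle by (simp add: gpot_def)
        qed
      qed
    next
      show "\<And>x. gpot n x \<ge> 0" by (rule gpot_nonneg)
      show "9 * (real n + 1) \<ge> 0" by simp
    next
      let ?G = "{Y. cplx Y < m}"
      have pr: "measure_pmf.prob (smo_step mut n P) {P'. has P' 0 \<or> mc P' < m} \<ge> 1 / real (card P) * measure_pmf.prob (mut n Z) ?G"
        by (rule smo_prog[OF inv Z(1)]) (use mc_new[OF fin] in \<open>auto simp: m_def\<close>)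
      have hv: "measure_pmf.prob (hvl_prime n Z) ?G \<ge> 1/3"
        unfolding t by (rule hvl_del) (use del_leaf_props Z t in \<open>auto simp: cplx_def\<close>)
      have a: "1 / real (card P) \<ge> 1 / (real n + 1)" using cP cPpos
        by (simp add: frac_le)
      have b: "measure_pmf.prob (mut n Z) ?G \<ge> 1/3 * (1/3)"
        using Mp[of Z ?G] hv by linarith
      have mm: "1 / real (card P) * measure_pmf.prob (mut n Z) ?G \<ge> 1 / (real n + 1) * (1/3 * (1/3))"
        by (rule mult_mono[OF a b]) auto
      have e: "1 / (real n + 1) * (1/3 * (1/3)) = 1 / (9 * (real n + 1))" by simp
      have "measure_pmf.prob (smo_step mut n P) {P'. has P' 0 \<or> mc P' < m} \<ge> 1 / (9 * (real n + 1))"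
        using order_trans[OF mm[unfolded e] pr] .
      then have "9 * (real n + 1) * measure_pmf.prob (smo_step mut n P) {P'. has P' 0 \<or> mc P' < m}
          \<ge> 9 * (real n + 1) * (1 / (9 * (real n + 1)))"
        by (rule mult_left_mono) simp
      then show "1 \<le> 9 * (real n + 1) * measure_pmf.prob (smo_step mut n P) {P'. has P' 0 \<or> mc P' < m}"
        by simp
    qed
  qed
qed



lemma exp_bound:
  assumes n: "n \<ge> 1" and v0: "valid n X0"
    and Mv: "\<And>X. valid n X \<Longrightarrow> set_pmf (mut n X) \<subseteq> {Y. valid n Y}"
    and Mp: "\<And>X G. measure_pmf.prob (mut n X) G \<ge> 1/3 * measure_pmf.prob (hvl_prime n X) G"
  shows "expected_opt_time mut n X0 \<le> ennreal (SS n 0 + 9 * (real n + 1) * real (cplx X0))"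
proof -
  define V where "V s = (case s of None \<Rightarrow> 0 | Some P \<Rightarrow> ennreal (gpot n P))" for s
  define S where "S = insert None (Some ` {P. Inv n P})"
  define Bad where "Bad = {Some P | P. \<not> covers_front n P}"
  have s0: "Some {X0} \<in> S" using v0 by (simp add: S_def Inv_def)
  have cl: "set_pmf (stopped_step mut n s) \<subseteq> S" if s: "s \<in> S" for s
  proof (cases s)
    case None then show ?thesis by (simp add: stopped_step_def S_def)
  next
    case (Some P)
    then have inv: "Inv n P" using s by (auto simp: S_def)
    have "set_pmf (smo_step mut n P) \<subseteq> {P. Inv n P}"
    proof
      fix P' assume "P' \<in> set_pmf (smo_step mut n P)"
      then obtain X Y where X: "X \<in> P" "Y \<in> set_pmf (mut n X)" "P' = upd P Y"
        using smo_support'[OF inv] by blast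
      have "valid n X" using inv X(1) by (simp add: Inv_def)
      then have "valid n Y" using Mv X(2) by blast
      then show "P' \<in> {P. Inv n P}" using inv_upd[OF inv] X(3) by simp
    qed
    then show ?thesis using Some by (auto simp: stopped_step_def S_def)
  qed
  have dr: "(\<integral>\<^sup>+x. V x \<partial>stopped_step mut n s) + indicator Bad s \<le> V s" if s: "s \<in> S" for s
  proof (cases s)
    case None then show ?thesis by (simp add: stopped_step_def V_def Bad_def)
  next
    case (Some P)
    then have inv: "Inv n P" using s by (auto simp: S_def)
    show ?thesis
    proof (cases "covers_front n P")
      case True then show ?thesis using Some by (simp add: stopped_step_def V_def Bad_def)
    next
      case False
      have "(\<integral>\<^sup>+x. V x \<partial>stopped_step mut n s) = (\<integral>\<^sup>+x. ennreal (gpot n x) \<partial>smo_step mut n P)"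
        using Some False by (simp add: stopped_step_def V_def)
      moreover have "indicator Bad s = (1::ennreal)" using Some False by (simp add: Bad_def)
      ultimately show ?thesis using main_drift[where mut=mut, OF n inv False Mv Mp] Some by (simp add: V_def)
    qed
  qed
  have D: "(\<Sum>t. emeasure (((\<lambda>D. bind_pmf D (stopped_step mut n)) ^^ t) (return_pmf (Some {X0}))) Bad) \<le> V (Some {X0})"
    by (rule drift[OF s0 cl dr])
  have "expected_opt_time mut n X0 = (\<Sum>t. emeasure (((\<lambda>D. bind_pmf D (stopped_step mut n)) ^^ t) (return_pmf (Some {X0}))) Bad)"
    unfolding expected_opt_time_def prob_not_done_def stopped_dist_def Bad_def
    by (simp add: measure_pmf.emeasure_eq_measure)
  also have "\<dots> \<le> V (Some {X0})" by (rule D)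
  also have "\<dots> \<le> ennreal (SS n 0 + 9 * (real n + 1) * real (cplx X0))"
  proof -
    have "gpot n {X0} \<le> SS n 0 + 9 * (real n + 1) * real (cplx X0)"
    proof (cases "has {X0} 0")
      case True
      then have "gpot n {X0} = SS n (lev n {X0})" by (simp add: gpot_def)
      also have "\<dots> \<le> SS n 0" by (rule SS_mono) simp
      finally have "gpot n {X0} \<le> SS n 0" .
      moreover have "0 \<le> 9 * (real n + 1) * real (cplx X0)" by simp
      ultimately show ?thesis by linarith
    next
      case False then show ?thesis by (simp add: gpot_def mc_def)
    qed
    then show ?thesis by (simp add: V_def ennreal_leI)
  qed
  finally show ?thesis .
qed

lemma SS0: "SS n 0 = 18 * real n * (real n + 1) * harm n"
proof -
  have "(\<Sum>j\<in>{0..<n}. 1 / (real n - real j)) = (\<Sum>i\<in>{0..<n}. 1 / (real n - real (n + 0 - Suc i)))"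
    by (rule sum.atLeastLessThan_rev)
  also have "\<dots> = (\<Sum>i<n. inverse (real (Suc i)))"
    by (rule sum.cong) (auto simp: of_nat_diff field_simps)
  also have "\<dots> = harm n" by (simp add: harm_altdef)
  finally have h: "(\<Sum>j\<in>{0..<n}. 1 / (real n - real j)) = harm n" .
  have "SS n 0 = (\<Sum>j\<in>{0..<n}. 18 * real n * (real n + 1) * (1 / (real n - real j)))"
    unfolding SS_def d2_def by (rule sum.cong) auto
  also have "\<dots> = 18 * real n * (real n + 1) * (\<Sum>j\<in>{0..<n}. 1 / (real n - real j))"
    by (rule sum_distrib_left[symmetric])
  also have "\<dots> = 18 * real n * (real n + 1) * harm n"
    by (simp only: h)
  finally show ?thesis .
qed

lemma harm_le: "n \<ge> 1 \<Longrightarrow> harm n \<le> 1 + ln (real n)"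
proof -
  assume "n \<ge> 1"
  then obtain m where m: "n = Suc m" by (cases n) auto
  have "harm (Suc m) - ln (real (Suc m)) \<le> harm (Suc 0) - ln (real (Suc 0))"
    using decseq_harm_diff_ln unfolding decseq_def by blast
  moreover have "harm (Suc 0) = (1::real)" by (simp add: harm_altdef)
  ultimately show ?thesis using m by simp
qed

lemma final_arith:
  assumes "n \<ge> 3"
  shows "SS n 0 + 9 * (real n + 1) * real T \<le> 72 * (real n * real T + (real n)^2 * ln (real n))"
proof -
  have l3: "ln (real n) \<ge> 1"
  proof -
    have "exp 1 \<le> real n" using exp_le assms by linarith
    then show ?thesis using ln_ge_iff[of "real n" 1] assms by simp
  qed
  have h: "harm n \<le> 2 * ln (real n)" using harm_le[of n] assms l3 by simp
  have np: "real n \<ge> 3" using assms by simp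
  have "SS n 0 = 18 * real n * (real n + 1) * harm n" by (rule SS0)
  also have "\<dots> \<le> 18 * real n * (2 * real n) * (2 * ln (real n))"
    by (rule mult_mono) (use h np harm_nonneg[where n=n] in auto)
  also have "\<dots> = 72 * (real n)^2 * ln (real n)" by (simp add: power2_eq_square)
  finally have a: "SS n 0 \<le> 72 * (real n)^2 * ln (real n)" .
  have b: "9 * (real n + 1) * real T \<le> 72 * real n * real T"
    by (rule mult_right_mono) (use np in auto)
  show ?thesis using a b by (simp add: algebra_simps)
qed

theorem theorem4:
  shows "\<exists>c > 0. \<exists>n0. \<forall>n \<ge> n0. \<forall>X0. valid n X0 \<longrightarrow>
    expected_opt_time mutate_single n X0
      \<le> ennreal (c * (real n * real (cplx X0) + (real n)^2 * ln (real n))) \<and>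
    expected_opt_time mutate_multi n X0
      \<le> ennreal (c * (real n * real (cplx X0) + (real n)^2 * ln (real n)))"
proof (rule exI[of _ 72], rule conjI)
  show "(72::real) > 0" by simp
next
  show "\<exists>n0. \<forall>n \<ge> n0. \<forall>X0. valid n X0 \<longrightarrow>
    expected_opt_time mutate_single n X0
      \<le> ennreal (72 * (real n * real (cplx X0) + (real n)^2 * ln (real n))) \<and>
    expected_opt_time mutate_multi n X0
      \<le> ennreal (72 * (real n * real (cplx X0) + (real n)^2 * ln (real n)))"
  proof (intro exI[of _ 3] allI impI)
  fix n X0 assume n3: "3 \<le> n" and v: "valid n X0"
  have n: "n \<ge> 1" using n3 by simp
  have F: "ennreal (SS n 0 + 9 * (real n + 1) * real (cplx X0))
        \<le> ennreal (72 * (real n * real (cplx X0) + (real n)^2 * ln (real n)))"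
    by (rule ennreal_leI) (rule final_arith[OF n3])
  have "expected_opt_time mutate_single n X0 \<le> ennreal (SS n 0 + 9 * (real n + 1) * real (cplx X0))"
    by (rule exp_bound[OF n v], erule single_valid[OF n], rule single_prob)
  then have S1: "expected_opt_time mutate_single n X0 \<le> ennreal (72 * (real n * real (cplx X0) + (real n)^2 * ln (real n)))"
    using F by (rule order_trans)
  have "expected_opt_time mutate_multi n X0 \<le> ennreal (SS n 0 + 9 * (real n + 1) * real (cplx X0))"
    by (rule exp_bound[OF n v], erule multi_valid[OF n], rule multi_prob)
  then have S2: "expected_opt_time mutate_multi n X0 \<le> ennreal (72 * (real n * real (cplx X0) + (real n)^2 * ln (real n)))"
    using F by (rule order_trans)
  show "expected_opt_time mutate_single n X0 \<le> ennreal (72 * (real n * real (cplx X0) + (real n)^2 * ln (real n))) \<and>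
    expected_opt_time mutate_multi n X0 \<le> ennreal (72 * (real n * real (cplx X0) + (real n)^2 * ln (real n)))"
    using S1 S2 by (rule conjI)
  qed
qed

end
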